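(* For every finite multiset $\Gamma$ of IMLL formulas and formula $\varphi$: if $\Gamma\Vdash\varphi$, then $\Gamma\vdash\varphi$ (derivable in NIMLL).
   Context: Fix a countably infinite set $\mathbb{A}$ of atoms. IMLL formulas: $\varphi::= p\in\mathbb{A}\mid\varphi\otimes\varphi\mid \mathrm{I}\mid\varphi\multimap\varphi$. Collections are finite multisets; "$,$" denotes multiset union, $\emptyset$ the empty multiset. NIMLL is the sequent-style natural deduction system with rules: (ax) $\varphi\triangleright\varphi$; ($\multimap$I) from $\Gamma,\varphi\triangleright\psi$ infer $\Gamma\triangleright\varphi\multimap\psi$; ($\multimap$E) from $\Gamma\triangleright\varphi\multimap\psi$ and $\Delta\triangleright\varphi$ infer $\Gamma,\Delta\triangleright\psi$; ($\mathrm{I}$I) $\emptyset\triangleright\mathrm{I}$; ($\mathrm{I}$E) from $\Gamma\triangleright\varphi$ and $\Delta\triangleright\mathrm{I}$ infer $\Gamma,\Delta\triangleright\varphi$; ($\otimes$I) from $\Gamma\triangleright\varphi$ and $\Delta\triangleright\psi$ infer $\Gamma,\Delta\triangleright\varphi\otimes\psi$; ($\otimes$E) from $\Gamma\triangleright\varphi\otimes\psi$ and $\Delta,\varphi,\psi\triangleright\chi$ infer $\Gamma,\Delta\triangleright\chi$. $\Gamma\vdash\varphi$ means $\Gamma\triangleright\varphi$ is derivable. An atomic rule is $(P_1\triangleright p_1,\dots,P_n\triangleright p_n)\Rightarrow p$ ($n\ge0$, $P_i$ finite multisets of atoms); a base is a set of atomic rules. Derivability $\vdash_{\mathscr{B}}$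 is the least relation with (Ref) $[p]\vdash_{\mathscr{B}}p$; (App) if $(P_1\triangleright p_1,\dots,P_n\triangleright p_n)\Rightarrow p\in\mathscr{B}$ and $S_i,P_i\vdash_{\mathscr{B}}p_i$ for all $i$, then $S_1,\dots,S_n\vdash_{\mathscr{B}}p$. Support: (At) $\Vdash^{P}_{\mathscr{B}}p$ iff $P\vdash_{\mathscr{B}}p$; ($\otimes$) $\Vdash^{P}_{\mathscr{B}}\varphi\otimes\psi$ iff for every $\mathscr{X}\supseteq\mathscr{B}$, multiset of atoms $U$, atom $p$, if $\varphi,\psi\Vdash^{U}_{\mathscr{X}}p$ then $\Vdash^{P,U}_{\mathscr{X}}p$; ($\mathrm{I}$) $\Vdash^{P}_{\mathscr{B}}\mathrm{I}$ iff for every $\mathscr{X}\supseteq\mathscr{B}$, $U$, $p$, if $\Vdash^{U}_{\mathscr{X}}p$ then $\Vdash^{P,U}_{\mathscr{X}}p$; ($\multimap$) $\Vdash^{P}_{\mathscr{B}}\varphi\multimap\psi$ iff $\varphi\Vdash^{P}_{\mathscr{B}}\psi$; (comma) for nonempty $\Gamma,\Delta$, $\Vdash^{P}_{\mathscr{B}}\Gamma,\Delta$ iff $P=U,V$ for some $U,V$ with $\Vdash^{U}_{\mathscr{B}}\Gamma$, $\Vdash^{V}_{\mathscr{B}}\Delta$ (singleton $[\varphi]$ supported iff $\varphi$ is); (Inf) for nonempty $\Gamma$, $\Gamma\Vdash^{P}_{\mathscr{B}}\varphi$ iff for every $\mathscr{X}\supseteq\mathscr{B}$ and $U$, if $\Vdash^{U}_{\mathscr{X}}\Gamma$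 then $\Vdash^{P,U}_{\mathscr{X}}\varphi$; for empty $\Gamma$ it means $\Vdash^{P}_{\mathscr{B}}\varphi$. Validity: $\Gamma\Vdash\varphi$ iff $\Gamma\Vdash^{\emptyset}_{\mathscr{B}}\varphi$ for every base $\mathscr{B}$. *)

theory Defs
  imports Main "HOL-Library.Multiset"
begin

type_synonym atom = nat

datatype formula =
    Atom atom
  | Tensor formula formula
  | One
  | Lolli formula formula

inductive nimll :: "formula multiset \<Rightarrow> formula \<Rightarrow> bool" where
  ax: "nimll {#\<phi>#} \<phi>"
| lolliI: "nimll (\<Gamma> + {#\<phi>#}) \<psi> \<Longrightarrow> nimll \<Gamma> (Lolli \<phi> \<psi>)"
| lolliE: "nimll \<Gamma> (Lolli \<phi> \<psi>) \<Longrightarrow> nimll \<Delta> \<phi> \<Longrightarrow> nimll (\<Gamma> + \<Delta>) \<psi>"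
| oneI: "nimll {#} One"
| oneE: "nimll \<Gamma> \<phi> \<Longrightarrow> nimll \<Delta> One \<Longrightarrow> nimll (\<Gamma> + \<Delta>) \<phi>"
| tensorI: "nimll \<Gamma> \<phi> \<Longrightarrow> nimll \<Delta> \<psi> \<Longrightarrow> nimll (\<Gamma> + \<Delta>) (Tensor \<phi> \<psi>)"
| tensorE: "nimll \<Gamma> (Tensor \<phi> \<psi>) \<Longrightarrow> nimll (\<Delta> + {#\<phi>, \<psi>#}) \<chi>
            \<Longrightarrow> nimll (\<Gamma> + \<Delta>) \<chi>"

text \<open>An atomic rule (P1|>p1,...,Pn|>pn) => p: list of premises and a conclusion.\<close>
type_synonym atomic_rule = "(atom multiset \<times> atom) list \<times> atom"
type_synonym base = "atomic_rule set"

inductive derivable_base :: "base \<Rightarrow> atom multiset \<Rightarrow> atom \<Rightarrow> bool" for B :: base where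
  Ref: "derivable_base B {#p#} p"
| App: "(prems, p) \<in> B \<Longrightarrow> length Ss = length prems \<Longrightarrow>
        (\<forall>i < length prems. derivable_base B (Ss ! i + fst (prems ! i)) (snd (prems ! i)))
        \<Longrightarrow> derivable_base B (sum_list Ss) p"

text \<open>Support of a formula at base B with atomic resources P.
  The inference clause with the nonempty context [phi, psi] and atomic conclusion p
  (used in the tensor clause) is unfolded: support of the multiset [phi,psi] by V means
  V splits as V1 + V2 supporting phi and psi respectively.\<close>
fun supp :: "base \<Rightarrow> atom multiset \<Rightarrow> formula \<Rightarrow> bool" where
  "supp B P (Atom p) = derivable_base B P p"
| "supp B P (Tensor \<phi> \<psi>) =
     (\<forall>X U p. B \<subseteq> X \<longrightarrow>
        (\<forall>Y V. X \<subseteq> Y \<longrightarrow>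
            (\<exists>V1 V2. V = V1 + V2 \<and> supp Y V1 \<phi> \<and> supp Y V2 \<psi>) \<longrightarrow>
            derivable_base Y (U + V) p)
        \<longrightarrow> derivable_base X (P + U) p)"
| "supp B P One =
     (\<forall>X U p. B \<subseteq> X \<longrightarrow> derivable_base X U p \<longrightarrow> derivable_base X (P + U) p)"
| "supp B P (Lolli \<phi> \<psi>) =
     (\<forall>X U. B \<subseteq> X \<longrightarrow> supp X U \<phi> \<longrightarrow> supp X (P + U) \<psi>)"

inductive supp_ctx :: "base \<Rightarrow> atom multiset \<Rightarrow> formula multiset \<Rightarrow> bool" where
  single: "supp B P \<phi> \<Longrightarrow> supp_ctx B P {#\<phi>#}"
| comma: "\<Gamma> \<noteq> {#} \<Longrightarrow> \<Delta> \<noteq> {#} \<Longrightarrow> supp_ctx B U \<Gamma> \<Longrightarrow> supp_ctx B V \<Delta>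
          \<Longrightarrow> supp_ctx B (U + V) (\<Gamma> + \<Delta>)"

definition supp_inf :: "formula multiset \<Rightarrow> base \<Rightarrow> atom multiset \<Rightarrow> formula \<Rightarrow> bool" where
  "supp_inf \<Gamma> B P \<phi> =
     (if \<Gamma> = {#} then supp B P \<phi>
      else (\<forall>X U. B \<subseteq> X \<longrightarrow> supp_ctx X U \<Gamma> \<longrightarrow> supp X (P + U) \<phi>))"

definition valid :: "formula multiset \<Rightarrow> formula \<Rightarrow> bool" where
  "valid \<Gamma> \<phi> = (\<forall>B. supp_inf \<Gamma> B {#} \<phi>)"

end

theory Submission
  imports Defs
begin

fun sub :: "formula \<Rightarrow> formula set" where
  "sub (Atom p) = {Atom p}"
| "sub (Tensor a b) = insert (Tensor a b) (sub a \<union> sub b)"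
| "sub One = {One}"
| "sub (Lolli a b) = insert (Lolli a b) (sub a \<union> sub b)"

lemma finite_sub: "finite (sub x)" by (induction x) auto
lemma sub_self: "x \<in> sub x" by (cases x) auto
lemma sub_trans: "y \<in> sub x \<Longrightarrow> z \<in> sub y \<Longrightarrow> z \<in> sub x"
  by (induction x) auto

lemma sub_L: "Lolli a b \<in> sub x \<Longrightarrow> a \<in> sub x \<and> b \<in> sub x"
  by (induction x) (auto simp: sub_self)
lemma sub_T: "Tensor a b \<in> sub x \<Longrightarrow> a \<in> sub x \<and> b \<in> sub x"
  by (induction x) (auto simp: sub_self)

definition closed :: "formula set \<Rightarrow> bool" where
  "closed S = (\<forall>a b. (Lolli a b \<in> S \<longrightarrow> a \<in> S \<and> b \<in> S) \<and> (Tensor a b \<in> S \<longrightarrow> a \<in> S \<and> b \<in> S))"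

lemma closedL: "closed S \<Longrightarrow> Lolli a b \<in> S \<Longrightarrow> a \<in> S \<and> b \<in> S"
  unfolding closed_def by blast
lemma closedT: "closed S \<Longrightarrow> Tensor a b \<in> S \<Longrightarrow> a \<in> S \<and> b \<in> S"
  unfolding closed_def by blast

lemma closed_sub: "closed (sub x)"
  unfolding closed_def using sub_L sub_T by blast
lemma closed_Un: "closed A \<Longrightarrow> closed B \<Longrightarrow> closed (A \<union> B)"
  unfolding closed_def by blast
lemma closed_UN: "(\<And>x. x \<in> A \<Longrightarrow> closed (F x)) \<Longrightarrow> closed (\<Union>x\<in>A. F x)"
  unfolding closed_def by blast

definition nbase :: "formula set \<Rightarrow> (formula \<Rightarrow> atom) \<Rightarrow> base" where
  "nbase S f =
    {([({#f a#}, f b)], f (Lolli a b)) | a b. Lolli a b \<in> S}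
  \<union> {([({#}, f (Lolli a b)), ({#}, f a)], f b) | a b. Lolli a b \<in> S}
  \<union> {([({#}, f a), ({#}, f b)], f (Tensor a b)) | a b. Tensor a b \<in> S}
  \<union> {([({#}, f (Tensor a b)), ({#f a, f b#}, p)], p) | a b p. Tensor a b \<in> S}
  \<union> {([], f One) | q::nat. One \<in> S}
  \<union> {([({#}, p), ({#}, f One)], p) | p. One \<in> S}"

lemma der_mono: "derivable_base B P p \<Longrightarrow> B \<subseteq> B' \<Longrightarrow> derivable_base B' P p"
proof (induction rule: derivable_base.induct)
  case (Ref p)
  show ?case by (simp add: derivable_base.Ref)
next
  case (App prems p Ss)
  then show ?case by (intro derivable_base.App) auto
qed

lemma app0: "([], p) \<in> B \<Longrightarrow> derivable_base B {#} p"
  using derivable_base.App[of "[]" p B "[]"] by simp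

lemma app1: "([(P1,p1)], p) \<in> B \<Longrightarrow> derivable_base B (S1 + P1) p1 \<Longrightarrow> derivable_base B S1 p"
  using derivable_base.App[of "[(P1,p1)]" p B "[S1]"] by simp

lemma app2: "([(P1,p1),(P2,p2)], p) \<in> B \<Longrightarrow> derivable_base B (S1 + P1) p1
   \<Longrightarrow> derivable_base B (S2 + P2) p2 \<Longrightarrow> derivable_base B (S1 + S2) p"
proof -
  assume r: "([(P1,p1),(P2,p2)], p) \<in> B" and d1: "derivable_base B (S1 + P1) p1"
    and d2: "derivable_base B (S2 + P2) p2"
  have "\<forall>i<length [(P1,p1),(P2,p2)]. derivable_base B ([S1,S2] ! i + fst ([(P1,p1),(P2,p2)] ! i)) (snd ([(P1,p1),(P2,p2)] ! i))"
    using d1 d2 by (auto simp: less_Suc_eq)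
  then show ?thesis using derivable_base.App[OF r, of "[S1,S2]"] by simp
qed


lemma nb_LI: "Lolli a b \<in> S \<Longrightarrow> ([({#f a#}, f b)], f (Lolli a b)) \<in> nbase S f"
  unfolding nbase_def Un_iff mem_Collect_eq by blast
lemma nb_LE: "Lolli a b \<in> S \<Longrightarrow> ([({#}, f (Lolli a b)), ({#}, f a)], f b) \<in> nbase S f"
  unfolding nbase_def Un_iff mem_Collect_eq by blast
lemma nb_TI: "Tensor a b \<in> S \<Longrightarrow> ([({#}, f a), ({#}, f b)], f (Tensor a b)) \<in> nbase S f"
  unfolding nbase_def Un_iff mem_Collect_eq by blast
lemma nb_TE: "Tensor a b \<in> S \<Longrightarrow> ([({#}, f (Tensor a b)), ({#f a, f b#}, p)], p) \<in> nbase S f"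
  unfolding nbase_def Un_iff mem_Collect_eq by blast
lemma nb_OI: "One \<in> S \<Longrightarrow> ([], f One) \<in> nbase S f"
  unfolding nbase_def Un_iff mem_Collect_eq by blast
lemma nb_OE: "One \<in> S \<Longrightarrow> ([({#}, p), ({#}, f One)], p) \<in> nbase S f"
  unfolding nbase_def Un_iff mem_Collect_eq by blast

lemma main:
  assumes cl: "closed S" and at: "\<And>p. Atom p \<in> S \<Longrightarrow> f (Atom p) = p"
  shows "x \<in> S \<Longrightarrow> nbase S f \<subseteq> X \<Longrightarrow> supp X U x = derivable_base X U (f x)"
proof (induction x arbitrary: X U)
  case (Atom p)
  then show ?case using at by simp
next
  case (Tensor a b)
  have aS: "a \<in> S" and bS: "b \<in> S" using Tensor.prems cl closedL closedT by blast+
  have rI: "([({#}, f a), ({#}, f b)], f (Tensor a b)) \<in> nbase S f"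
    using Tensor.prems(1) by (rule nb_TI)
  have rE: "\<And>p. ([({#}, f (Tensor a b)), ({#f a, f b#}, p)], p) \<in> nbase S f"
    using Tensor.prems(1) by (rule nb_TE)
  show ?case
  proof
    assume H: "supp X U (Tensor a b)"
    have "\<forall>Y V. X \<subseteq> Y \<longrightarrow> (\<exists>V1 V2. V = V1 + V2 \<and> supp Y V1 a \<and> supp Y V2 b)
            \<longrightarrow> derivable_base Y ({#} + V) (f (Tensor a b))"
    proof (intro allI impI)
      fix Y V assume XY: "X \<subseteq> Y" and "\<exists>V1 V2. V = V1 + V2 \<and> supp Y V1 a \<and> supp Y V2 b"
      then obtain V1 V2 where V: "V = V1 + V2" "supp Y V1 a" "supp Y V2 b" by blast
      have NY: "nbase S f \<subseteq> Y" using XY Tensor.prems by auto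
      have "derivable_base Y V1 (f a)" using Tensor.IH(1)[OF aS NY] V by simp
      moreover have "derivable_base Y V2 (f b)" using Tensor.IH(2)[OF bS NY] V by simp
      ultimately show "derivable_base Y ({#} + V) (f (Tensor a b))"
        using app2[OF subsetD[OF NY rI], of V1 V2] V by simp
    qed
    moreover have "X \<subseteq> X" by simp
    ultimately have "derivable_base X (U + {#}) (f (Tensor a b))"
      using H[unfolded supp.simps, THEN spec[of _ X], THEN spec[of _ "{#}"], THEN spec[of _ "f (Tensor a b)"]]
      by blast
    then show "derivable_base X U (f (Tensor a b))" by simp
  next
    assume D: "derivable_base X U (f (Tensor a b))"
    show "supp X U (Tensor a b)"
      unfolding supp.simps
    proof (intro allI impI)
      fix Y W p
      assume XY: "X \<subseteq> Y" and H: "\<forall>Z V. Y \<subseteq> Z \<longrightarrow>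
           (\<exists>V1 V2. V = V1 + V2 \<and> supp Z V1 a \<and> supp Z V2 b) \<longrightarrow> derivable_base Z (W + V) p"
      have NY: "nbase S f \<subseteq> Y" using XY Tensor.prems by auto
      have "supp Y {#f a#} a" using Tensor.IH(1)[OF aS NY] derivable_base.Ref by simp
      moreover have "supp Y {#f b#} b" using Tensor.IH(2)[OF bS NY] derivable_base.Ref by simp
      ultimately have "\<exists>V1 V2. {#f a#} + {#f b#} = V1 + V2 \<and> supp Y V1 a \<and> supp Y V2 b" by blast
      hence "derivable_base Y (W + ({#f a#} + {#f b#})) p" using H[rule_format, of Y "{#f a#} + {#f b#}"] by simp
      hence d2: "derivable_base Y (W + {#f a, f b#}) p" by (simp add: add_mset_commute)
      have d1: "derivable_base Y (U + {#}) (f (Tensor a b))" using der_mono[OF D XY] by simp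
      show "derivable_base Y (U + W) p" using app2[OF subsetD[OF NY rE] d1 d2] .
    qed
  qed
next
  case One
  have rI: "([], f One) \<in> nbase S f" using One.prems(1) by (rule nb_OI)
  have rE: "\<And>p. ([({#}, p), ({#}, f One)], p) \<in> nbase S f"
    using One.prems(1) by (rule nb_OE)
  show ?case
  proof
    assume H: "supp X U One"
    have "derivable_base X {#} (f One)" using app0 subsetD[OF One.prems(2) rI] by blast
    then have "derivable_base X (U + {#}) (f One)"
      using H[unfolded supp.simps, THEN spec[of _ X], THEN spec[of _ "{#}"], THEN spec[of _ "f One"]]
      by blast
    then show "derivable_base X U (f One)" by simp
  next
    assume D: "derivable_base X U (f One)"
    show "supp X U One" unfolding supp.simps
    proof (intro allI impI)
      fix Y W p assume XY: "X \<subseteq> Y" and dW: "derivable_base Y W p"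
      have NY: "nbase S f \<subseteq> Y" using XY One.prems by auto
      have "derivable_base Y (W + U) p"
        using app2[OF subsetD[OF NY rE[of p]], of W U] dW der_mono[OF D XY] by simp
      then show "derivable_base Y (U + W) p" by (simp add: add.commute)
    qed
  qed
next
  case (Lolli a b)
  have aS: "a \<in> S" and bS: "b \<in> S" using Lolli.prems cl closedL closedT by blast+
  have rI: "([({#f a#}, f b)], f (Lolli a b)) \<in> nbase S f"
    using Lolli.prems(1) by (rule nb_LI)
  have rE: "([({#}, f (Lolli a b)), ({#}, f a)], f b) \<in> nbase S f"
    using Lolli.prems(1) by (rule nb_LE)
  show ?case
  proof
    assume H: "supp X U (Lolli a b)"
    have "supp X {#f a#} a" using Lolli.IH(1)[OF aS Lolli.prems(2)] derivable_base.Ref by simp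
    hence "supp X (U + {#f a#}) b"
      using H[unfolded supp.simps, THEN spec[of _ X], THEN spec[of _ "{#f a#}"]] by blast
    hence "derivable_base X (U + {#f a#}) (f b)" using Lolli.IH(2)[OF bS Lolli.prems(2)] by simp
    then show "derivable_base X U (f (Lolli a b))" using app1[OF subsetD[OF Lolli.prems(2) rI]] by blast
  next
    assume D: "derivable_base X U (f (Lolli a b))"
    show "supp X U (Lolli a b)" unfolding supp.simps
    proof (intro allI impI)
      fix Y V assume XY: "X \<subseteq> Y" and sV: "supp Y V a"
      have NY: "nbase S f \<subseteq> Y" using XY Lolli.prems by auto
      have "derivable_base Y V (f a)" using Lolli.IH(1)[OF aS NY] sV by simp
      hence "derivable_base Y (U + V) (f b)"
        using app2[OF subsetD[OF NY rE], of U V] der_mono[OF D XY] by simp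
      then show "supp Y (U + V) b" using Lolli.IH(2)[OF bS NY] by simp
    qed
  qed
qed

lemma len1: "length Ss = Suc 0 \<Longrightarrow> \<exists>S1. Ss = [S1]"
  by (cases Ss) auto
lemma len2: "length Ss = Suc (Suc 0) \<Longrightarrow> \<exists>S1 S2. Ss = [S1, S2]"
  by (cases Ss; cases "tl Ss") auto

lemma back_tr:
  assumes cl: "closed S" and inv: "\<And>x. x \<in> S \<Longrightarrow> g (f x) = x"
  shows "derivable_base (nbase S f) P p \<Longrightarrow> nimll (image_mset g P) (g p)"
proof (induction rule: derivable_base.induct)
  case (Ref p)
  show ?case using nimll.ax by simp
next
  case (App prems p Ss)
  have IH0: "0 < length prems \<Longrightarrow> nimll (image_mset g (Ss ! 0 + fst (prems ! 0))) (g (snd (prems ! 0)))"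
    using App.IH by blast
  have IH1: "1 < length prems \<Longrightarrow> nimll (image_mset g (Ss ! 1 + fst (prems ! 1))) (g (snd (prems ! 1)))"
    using App.IH by blast
  have "(((((\<exists>a b. (prems = [({#f a#}, f b)] \<and> p = f (Lolli a b)) \<and> Lolli a b \<in> S) \<or>
          (\<exists>a b. (prems = [({#}, f (Lolli a b)), ({#}, f a)] \<and> p = f b) \<and> Lolli a b \<in> S)) \<or>
         (\<exists>a b. (prems = [({#}, f a), ({#}, f b)] \<and> p = f (Tensor a b)) \<and> Tensor a b \<in> S)) \<or>
        (\<exists>a b q. (prems = [({#}, f (Tensor a b)), ({#f a, f b#}, q)] \<and> p = q) \<and> Tensor a b \<in> S)) \<or>
       (\<exists>q::nat. (prems = [] \<and> p = f One) \<and> One \<in> S)) \<or>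
      (\<exists>q. (prems = [({#}, q), ({#}, f One)] \<and> p = q) \<and> One \<in> S)"
    using App.hyps(1) unfolding nbase_def by (simp only: mem_Collect_eq Un_iff prod.inject)
  then show ?case
  proof (elim disjE exE conjE)
    fix a b assume LI: "prems = [({#f a#}, f b)]" "p = f (Lolli a b)" "Lolli a b \<in> S"
    have ab: "a \<in> S" "b \<in> S" using LI cl closedL closedT by blast+
    obtain S1 where Ss: "Ss = [S1]" using len1[of Ss] App.hyps(2) LI by auto
    have "nimll (image_mset g (S1 + {#f a#})) (g (f b))" using IH0 LI Ss by simp
    hence "nimll (image_mset g S1 + {#a#}) b" using inv ab by simp
    thus ?thesis using nimll.lolliI LI Ss inv by simp
  next
    fix a b assume LE: "prems = [({#}, f (Lolli a b)), ({#}, f a)]" "p = f b" "Lolli a b \<in> S"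
    have ab: "a \<in> S" "b \<in> S" using LE cl closedL closedT by blast+
    obtain S1 S2 where Ss: "Ss = [S1, S2]" using len2[of Ss] App.hyps(2) LE by auto
    have "nimll (image_mset g S1) (g (f (Lolli a b)))" using IH0 LE Ss by simp
    moreover have "nimll (image_mset g S2) (g (f a))" using IH1 LE Ss by simp
    ultimately show ?thesis using nimll.lolliE LE Ss inv ab by fastforce
  next
    fix a b assume TI: "prems = [({#}, f a), ({#}, f b)]" "p = f (Tensor a b)" "Tensor a b \<in> S"
    have ab: "a \<in> S" "b \<in> S" using TI cl closedL closedT by blast+
    obtain S1 S2 where Ss: "Ss = [S1, S2]" using len2[of Ss] App.hyps(2) TI by auto
    have "nimll (image_mset g S1) (g (f a))" using IH0 TI Ss by simp
    moreover have "nimll (image_mset g S2) (g (f b))" using IH1 TI Ss by simp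
    ultimately show ?thesis using nimll.tensorI TI Ss inv ab by fastforce
  next
    fix a b q assume TE: "prems = [({#}, f (Tensor a b)), ({#f a, f b#}, q)]" "p = q" "Tensor a b \<in> S"
    have ab: "a \<in> S" "b \<in> S" using TE cl closedL closedT by blast+
    obtain S1 S2 where Ss: "Ss = [S1, S2]" using len2[of Ss] App.hyps(2) TE by auto
    have "nimll (image_mset g S1) (g (f (Tensor a b)))" using IH0 TE Ss by simp
    hence t1: "nimll (image_mset g S1) (Tensor a b)" using inv TE by simp
    have "nimll (image_mset g (S2 + {#f a, f b#})) (g p)" using IH1 TE Ss by simp
    hence t2: "nimll (image_mset g S2 + {#a, b#}) (g p)" using inv ab by simp
    show ?thesis using nimll.tensorE[OF t1 t2] Ss by simp
  next
    fix q assume OI: "prems = []" "p = f One" "One \<in> S"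
    then have Ss: "Ss = []" using App.hyps(2) by simp
    show ?thesis using nimll.oneI OI Ss inv by simp
  next
    fix q assume OE: "prems = [({#}, q), ({#}, f One)]" "p = q" "One \<in> S"
    obtain S1 S2 where Ss: "Ss = [S1, S2]" using len2[of Ss] App.hyps(2) OE by auto
    have "nimll (image_mset g S1) (g p)" using IH0 OE Ss by simp
    moreover have "nimll (image_mset g S2) (g (f One))" using IH1 OE Ss by simp
    ultimately show ?thesis using nimll.oneE OE Ss inv by fastforce
  qed
qed

lemma ctx:
  assumes cl: "closed S" and at: "\<And>p. Atom p \<in> S \<Longrightarrow> f (Atom p) = p"
    and NX: "nbase S f \<subseteq> X"
  shows "\<Gamma> \<noteq> {#} \<Longrightarrow> set_mset \<Gamma> \<subseteq> S \<Longrightarrow> supp_ctx X (image_mset f \<Gamma>) \<Gamma>"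
proof (induction \<Gamma>)
  case empty
  then show ?case by simp
next
  case (add x M)
  have xS: "x \<in> S" using add.prems by simp
  have sx: "supp X {#f x#} x" using main[OF cl at xS NX] derivable_base.Ref by simp
  show ?case
  proof (cases "M = {#}")
    case True
    then show ?thesis using supp_ctx.single[OF sx] by simp
  next
    case False
    have "supp_ctx X (image_mset f M) M" using add.IH False add.prems by simp
    hence "supp_ctx X ({#f x#} + image_mset f M) ({#x#} + M)"
      using supp_ctx.comma[OF _ False supp_ctx.single[OF sx]] by simp
    then show ?thesis by simp
  qed
qed

theorem theorem4:
  fixes \<Gamma> :: "formula multiset" and \<phi> :: formula
  assumes "valid \<Gamma> \<phi>"
  shows "nimll \<Gamma> \<phi>"
proof -
  define S where "S = sub \<phi> \<union> (\<Union>x\<in>set_mset \<Gamma>. sub x)"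
  have finS: "finite S" unfolding S_def using finite_sub by auto
  have cl: "closed S" unfolding S_def by (intro closed_Un closed_UN closed_sub)
  obtain e :: "formula \<Rightarrow> nat" and n where e: "e ` S = {i. i < n}" "inj_on e S"
    using finite_imp_inj_to_nat_seg[OF finS] by blast
  define N where "N = Suc (Max (insert 0 (Atom -` S)))"
  have "finite (Atom -` S)" by (rule finite_vimageI[OF finS]) (simp add: inj_def)
  then have finA: "finite (insert 0 (Atom -` S))" by simp
  have N: "Atom p \<in> S \<Longrightarrow> p < N" for p
    unfolding N_def using Max_ge[OF finA, of p] by simp
  define f where "f x = (case x of Atom p \<Rightarrow> p | _ \<Rightarrow> N + e x)" for x
  have at: "\<And>p. Atom p \<in> S \<Longrightarrow> f (Atom p) = p" unfolding f_def by simp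
  have injf: "inj_on f S"
  proof (rule inj_onI)
    fix x y assume xS: "x \<in> S" and yS: "y \<in> S" and fe: "f x = f y"
    show "x = y"
    proof (cases x)
      case (Atom p)
      then show ?thesis using fe xS yS N[of p] unfolding f_def
        by (cases y) auto
    next
      case (Tensor a b)
      then show ?thesis using fe xS yS e(2) N unfolding f_def
        by (cases y) (auto dest: inj_onD)
    next
      case One
      then show ?thesis using fe xS yS e(2) N unfolding f_def
        by (cases y) (auto dest: inj_onD)
    next
      case (Lolli a b)
      then show ?thesis using fe xS yS e(2) N unfolding f_def
        by (cases y) (auto dest: inj_onD)
    qed
  qed
  define g where "g p = inv_into S f p" for p
  have inv: "\<And>x. x \<in> S \<Longrightarrow> g (f x) = x" unfolding g_def using injf by (simp add: inv_into_f_f)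
  have phiS: "\<phi> \<in> S" unfolding S_def by (simp add: sub_self)
  have GS: "set_mset \<Gamma> \<subseteq> S" unfolding S_def by (auto simp: sub_self)
  have gf: "image_mset g (image_mset f \<Gamma>) = \<Gamma>"
    using GS by (induction \<Gamma>) (auto simp: inv)
  have sinf: "supp_inf \<Gamma> (nbase S f) {#} \<phi>" using assms unfolding valid_def by blast
  have "derivable_base (nbase S f) (image_mset f \<Gamma>) (f \<phi>)"
  proof (cases "\<Gamma> = {#}")
    case True
    then show ?thesis using sinf main[OF cl at phiS order_refl] unfolding supp_inf_def by simp
  next
    case False
    have "supp_ctx (nbase S f) (image_mset f \<Gamma>) \<Gamma>" using ctx[OF cl at order_refl False GS] .
    then have "supp (nbase S f) (image_mset f \<Gamma>) \<phi>" using sinf False unfolding supp_inf_def by simp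
    then show ?thesis using main[OF cl at phiS order_refl] by simp
  qed
  then have "nimll (image_mset g (image_mset f \<Gamma>)) (g (f \<phi>))" using back_tr[where S=S and g=g and f=f, OF cl inv] by blast
  then show ?thesis using gf inv[OF phiS] by simp
qed

end
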